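(* Let $a<b$ and let $f:[a,b]\to\mathbb{R}$ be continuous. Define $$I_f(a,b)=\frac{1}{b-a}\int_a^b f(t)\,\mathrm{d}t,\quad B_f(a,b)=\frac{b-a}{2}\,I_f(a,b),\quad J_f(a,b)=b\,I_f(a,b)-\frac{1}{b-a}\int_a^b t\,f(t)\,\mathrm{d}t.$$ If $B_f(a,b)=J_f(a,b)$, then there exists $\eta\in(a,b)$ such that $f(\eta)=I_f(a,\eta)$, where $I_f(a,\eta)=\frac{1}{\eta-a}\int_a^\eta f(t)\,\mathrm{d}t$. *)

theory Defs
  imports "HOL-Analysis.Analysis"
begin

definition I_mean :: "(real \<Rightarrow> real) \<Rightarrow> real \<Rightarrow> real \<Rightarrow> real" where
  "I_mean f a b = (1 / (b - a)) * integral {a..b} f"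

definition B_mean :: "(real \<Rightarrow> real) \<Rightarrow> real \<Rightarrow> real \<Rightarrow> real" where
  "B_mean f a b = ((b - a) / 2) * I_mean f a b"

definition J_mean :: "(real \<Rightarrow> real) \<Rightarrow> real \<Rightarrow> real \<Rightarrow> real" where
  "J_mean f a b = b * I_mean f a b - (1 / (b - a)) * integral {a..b} (\<lambda>t. t * f t)"

end

theory Submission
  imports Defs
begin

theorem mainTheorem7:
  fixes f :: "real \<Rightarrow> real" and a b :: real
  assumes "a < b"
    and "continuous_on {a..b} f"
    and "B_mean f a b = J_mean f a b"
  shows "\<exists>\<eta>. a < \<eta> \<and> \<eta> < b \<and> f \<eta> = I_mean f a \<eta>"
proof -
  note ab = assms(1) and cf = assms(2)
  have cg: "continuous_on {a..b} (\<lambda>t. t * f t)"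
    by (intro continuous_intros cf)
  define F where "F x = integral {a..x} f" for x
  define G where "G x = integral {a..x} (\<lambda>t. t * f t)" for x
  define \<phi> where "\<phi> x = (x + a) / 2 * F x - G x" for x
  define \<phi>' where "\<phi>' x = F x / 2 - (x - a) * f x / 2" for x
  have dF: "(F has_field_derivative f x) (at x within {a..b})" if "x \<in> {a..b}" for x
    using integral_has_vector_derivative[OF cf that] unfolding F_def
    by (simp add: has_real_derivative_iff_has_vector_derivative)
  have dG: "(G has_field_derivative x * f x) (at x within {a..b})" if "x \<in> {a..b}" for x
    using integral_has_vector_derivative[OF cg that] unfolding G_def
    by (simp add: has_real_derivative_iff_has_vector_derivative)
  have dphi: "(\<phi> has_field_derivative \<phi>' x) (at x within {a..b})" if "x \<in> {a..b}" for x
  proof -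
    have "((\<lambda>x. (x + a) / 2 * F x - G x) has_field_derivative
           (1/2) * F x + (x + a) / 2 * f x - x * f x) (at x within {a..b})"
    proof -
      have h1: "((\<lambda>x. (x + a) / 2) has_field_derivative 1/2) (at x within {a..b})"
        by (auto intro!: derivative_eq_intros)
      show ?thesis
        using DERIV_diff[OF DERIV_mult[OF h1 dF[OF that]] dG[OF that]] by (simp add: algebra_simps)
    qed
    moreover have "(1/2) * F x + (x + a) / 2 * f x - x * f x = \<phi>' x"
      unfolding \<phi>'_def by (simp add: field_simps)
    ultimately show ?thesis unfolding \<phi>_def[abs_def] by simp
  qed
  have cphi: "continuous_on {a..b} \<phi>"
    using dphi by (rule DERIV_continuous_on)
  have phia: "\<phi> a = 0" unfolding \<phi>_def F_def G_def by simp
  have hyp: "(b - a) / 2 * (1 / (b - a) * F b) = b * (1 / (b - a) * F b) - 1 / (b - a) * G b"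
    using assms(3) unfolding B_mean_def J_mean_def I_mean_def F_def G_def by simp
  have "G b = (b + a) / 2 * F b"
  proof -
    have ne: "b - a \<noteq> 0" using ab by simp
    have l: "(b - a) / 2 * (1 / (b - a) * F b) = F b / 2" using ne by (simp add: field_simps)
    have r: "b * (1 / (b - a) * F b) - 1 / (b - a) * G b = (b * F b - G b) / (b - a)"
      by (simp add: diff_divide_distrib)
    have "F b / 2 = (b * F b - G b) / (b - a)" using hyp by (simp only: l r)
    then have "F b / 2 * (b - a) = b * F b - G b" using ne by (simp add: field_simps)
    then show ?thesis by (simp add: field_simps)
  qed
  then have phib: "\<phi> b = 0" unfolding \<phi>_def by simp
  have "\<exists>z. a < z \<and> z < b \<and> (\<lambda>v. \<phi>' z * v) = (\<lambda>v. 0)"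
  proof (rule Rolle_deriv[OF ab _ cphi])
    show "\<phi> a = \<phi> b" using phia phib by simp
    fix x assume x: "a < x" "x < b"
    then have "(\<phi> has_field_derivative \<phi>' x) (at x)"
      using dphi[of x] at_within_Icc_at[of a x b] by simp
    then show "(\<phi> has_derivative (\<lambda>v. \<phi>' x * v)) (at x)"
      by (simp add: has_field_derivative_def)
  qed
  then obtain z where z: "a < z" "z < b" "\<phi>' z = 0"
    by (metis mult.right_neutral)
  then have "F z = (z - a) * f z" unfolding \<phi>'_def by simp
  then have "f z = I_mean f a z" using z unfolding I_mean_def F_def by (simp add: field_simps)
  then show ?thesis using z by blast
qed

end
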